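(* Let $L$ be a frame and $X_L$ its Priestley space with Stone map $\varphi$. (1) For $a\in L$, we have $a=\bigvee\{b\in K(L)\mid b\le a\}$ if and only if $\mathrm{core}\,\varphi(a)$ is dense in $\varphi(a)$. (2) $L$ is an algebraic frame if and only if $X_L$ is an algebraic L-space.
   Context: A frame is a complete lattice satisfying $a\wedge\bigvee S=\bigvee\{a\wedge s\mid s\in S\}$. In a frame $L$, $a\ll b$ means: whenever $b\le\bigvee S$ there is a finite $T\subseteq S$ with $a\le\bigvee T$; $a$ is compact if $a\ll a$, and $K(L)$ is the set of compact elements. $L$ is an algebraic frame if every $a\in L$ satisfies $a=\bigvee\{b\in K(L)\mid b\le a\}$. A Priestley space is a Stone space $X$ with a partial order such that clopen upsets separate points (if $x\not\le y$ there is a clopen upset containing $x$ but not $y$). An L-space is a Priestley space in which the downset of each clopen set is clopen and the closure of each open upset is open. ${\sf ClopUp}(X)$ denotes the set of clopen upsets of $X$. The Priestley space $X_L$ of a frame $L$ is the set of prime filters of $L$ ordered by inclusion, topologized by the subbasis $\{\varphi(a)\}\cup\{X_L\setminus\varphi(a)\}$ ($a\in L$), where $\varphi(a)=\{x\in X_L\mid a\in x\}$; it is an L-space. For an L-space $X$, its spatial part is $Y=\{y\in X\mid {\downarrow}y \text{ is clopen}\}$. A Scott upset of $X$ is a closed upset $F$ with $\min F\subseteq Y$; ${\sf ClopSUp}(X)$ is the set of clopen Scott upsets. For $U\in{\sf ClopUp}(X)$, $\mathrm{core}\,U=\bigcup\{V\in{\sf ClopSUp}(X)\mid V\subseteq U\}$.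 $X$ is an algebraic L-space if $\mathrm{core}\,U$ is dense in $U$ for every $U\in{\sf ClopUp}(X)$. *)

theory Defs
  imports "HOL-Analysis.Analysis"
begin

definition is_frame :: "'a::complete_lattice itself \<Rightarrow> bool" where
  "is_frame _ \<longleftrightarrow> (\<forall>(a::'a) S. inf a (Sup S) = Sup ((\<lambda>s. inf a s) ` S))"

definition way_below :: "'a::complete_lattice \<Rightarrow> 'a \<Rightarrow> bool" where
  "way_below a b \<longleftrightarrow> (\<forall>S. b \<le> Sup S \<longrightarrow> (\<exists>T. T \<subseteq> S \<and> finite T \<and> a \<le> Sup T))"

definition compact_el :: "'a::complete_lattice \<Rightarrow> bool" where
  "compact_el a \<longleftrightarrow> way_below a a"

definition K_el :: "'a::complete_lattice itself \<Rightarrow> 'a set" where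
  "K_el _ = {a. compact_el a}"

definition algebraic_frame :: "'a::complete_lattice itself \<Rightarrow> bool" where
  "algebraic_frame t \<longleftrightarrow> is_frame t \<and> (\<forall>a::'a. a = Sup {b \<in> K_el t. b \<le> a})"

definition prime_filter :: "'a::complete_lattice set \<Rightarrow> bool" where
  "prime_filter F \<longleftrightarrow>
     top \<in> F \<and> bot \<notin> F \<and>
     (\<forall>a b. a \<in> F \<and> a \<le> b \<longrightarrow> b \<in> F) \<and>
     (\<forall>a b. a \<in> F \<and> b \<in> F \<longrightarrow> inf a b \<in> F) \<and>
     (\<forall>a b. sup a b \<in> F \<longrightarrow> a \<in> F \<or> b \<in> F)"

definition XL_points :: "'a::complete_lattice itself \<Rightarrow> 'a set set" where
  "XL_points _ = {x. prime_filter x}"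

definition stone_map :: "'a::complete_lattice \<Rightarrow> 'a set set" where
  "stone_map a = {x. prime_filter x \<and> a \<in> x}"

text \<open>We generate on the whole type and take the subspace topology, which gives
  exactly the topology generated by the traces.\<close>
definition XL_topology :: "'a::complete_lattice itself \<Rightarrow> 'a set topology" where
  "XL_topology t = subtopology
     (topology_generated_by (range (\<lambda>a::'a. {x. a \<in> x}) \<union> range (\<lambda>a::'a. {x. a \<notin> x})))
     (XL_points t)"

definition clopenin :: "'b topology \<Rightarrow> 'b set \<Rightarrow> bool" where
  "clopenin T U \<longleftrightarrow> closedin T U \<and> openin T U"

definition is_upset :: "'b topology \<Rightarrow> ('b \<Rightarrow> 'b \<Rightarrow> bool) \<Rightarrow> 'b set \<Rightarrow> bool" where
  "is_upset T le U \<longleftrightarrow> U \<subseteq> topspace T \<and> (\<forall>x\<in>U. \<forall>y\<in>topspace T. le x y \<longrightarrow> y \<in> U)"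

definition down_set :: "'b topology \<Rightarrow> ('b \<Rightarrow> 'b \<Rightarrow> bool) \<Rightarrow> 'b set \<Rightarrow> 'b set" where
  "down_set T le S = {x \<in> topspace T. \<exists>s\<in>S. le x s}"

definition partial_order_on_space :: "'b topology \<Rightarrow> ('b \<Rightarrow> 'b \<Rightarrow> bool) \<Rightarrow> bool" where
  "partial_order_on_space T le \<longleftrightarrow>
     (\<forall>x\<in>topspace T. le x x) \<and>
     (\<forall>x\<in>topspace T. \<forall>y\<in>topspace T. le x y \<and> le y x \<longrightarrow> x = y) \<and>
     (\<forall>x\<in>topspace T. \<forall>y\<in>topspace T. \<forall>z\<in>topspace T. le x y \<and> le y z \<longrightarrow> le x z)"

definition stone_space :: "'b topology \<Rightarrow> bool" where
  "stone_space T \<longleftrightarrow> compact_space T \<and> Hausdorff_space T \<and>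
     (\<forall>U x. openin T U \<and> x \<in> U \<longrightarrow> (\<exists>V. clopenin T V \<and> x \<in> V \<and> V \<subseteq> U))"

definition priestley_space :: "'b topology \<Rightarrow> ('b \<Rightarrow> 'b \<Rightarrow> bool) \<Rightarrow> bool" where
  "priestley_space T le \<longleftrightarrow> stone_space T \<and> partial_order_on_space T le \<and>
     (\<forall>x\<in>topspace T. \<forall>y\<in>topspace T. \<not> le x y \<longrightarrow>
        (\<exists>U. clopenin T U \<and> is_upset T le U \<and> x \<in> U \<and> y \<notin> U))"

definition L_space :: "'b topology \<Rightarrow> ('b \<Rightarrow> 'b \<Rightarrow> bool) \<Rightarrow> bool" where
  "L_space T le \<longleftrightarrow> priestley_space T le \<and>
     (\<forall>U. clopenin T U \<longrightarrow> clopenin T (down_set T le U)) \<and>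
     (\<forall>U. openin T U \<and> is_upset T le U \<longrightarrow> openin T (T closure_of U))"

definition ClopUp :: "'b topology \<Rightarrow> ('b \<Rightarrow> 'b \<Rightarrow> bool) \<Rightarrow> 'b set set" where
  "ClopUp T le = {U. clopenin T U \<and> is_upset T le U}"

definition spatial_part :: "'b topology \<Rightarrow> ('b \<Rightarrow> 'b \<Rightarrow> bool) \<Rightarrow> 'b set" where
  "spatial_part T le = {y \<in> topspace T. clopenin T (down_set T le {y})}"

definition min_set :: "('b \<Rightarrow> 'b \<Rightarrow> bool) \<Rightarrow> 'b set \<Rightarrow> 'b set" where
  "min_set le F = {x \<in> F. \<forall>y\<in>F. le y x \<longrightarrow> y = x}"

definition scott_upset :: "'b topology \<Rightarrow> ('b \<Rightarrow> 'b \<Rightarrow> bool) \<Rightarrow> 'b set \<Rightarrow> bool" where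
  "scott_upset T le F \<longleftrightarrow> closedin T F \<and> is_upset T le F \<and> min_set le F \<subseteq> spatial_part T le"

definition ClopSUp :: "'b topology \<Rightarrow> ('b \<Rightarrow> 'b \<Rightarrow> bool) \<Rightarrow> 'b set set" where
  "ClopSUp T le = {V. clopenin T V \<and> scott_upset T le V}"

definition core :: "'b topology \<Rightarrow> ('b \<Rightarrow> 'b \<Rightarrow> bool) \<Rightarrow> 'b set \<Rightarrow> 'b set" where
  "core T le U = \<Union>{V \<in> ClopSUp T le. V \<subseteq> U}"

definition dense_in_set :: "'b topology \<Rightarrow> 'b set \<Rightarrow> 'b set \<Rightarrow> bool" where
  "dense_in_set T A U \<longleftrightarrow> A \<subseteq> U \<and> U \<subseteq> T closure_of A"

definition algebraic_L_space :: "'b topology \<Rightarrow> ('b \<Rightarrow> 'b \<Rightarrow> bool) \<Rightarrow> bool" where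
  "algebraic_L_space T le \<longleftrightarrow> L_space T le \<and>
     (\<forall>U\<in>ClopUp T le. dense_in_set T (core T le U) U)"

end

theory Submission
  imports Defs
begin



locale frm =
  fixes t :: "'a::complete_lattice itself"
  assumes frame: "is_frame t"
begin

lemma inf_Sup: "inf (a::'a) (Sup S) = Sup ((\<lambda>s. inf a s) ` S)"
  using frame unfolding is_frame_def by blast

lemma distr: "inf (a::'a) (sup b c) = sup (inf a b) (inf a c)"
  using inf_Sup[of a "{b,c}"] by (simp add: Sup_insert)

lemma distr2: "sup (a::'a) (inf b c) = inf (sup a b) (sup a c)"
proof -
  have "inf (sup a b) (sup a c) = sup (inf (sup a b) a) (inf (sup a b) c)" by (rule distr)
  also have "inf (sup a b) a = a" by (simp add: inf.absorb2)
  also have "inf (sup a b) c = sup (inf c a) (inf c b)" using distr[of c a b] by (simp add: inf_commute)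
  also have "sup a (sup (inf c a) (inf c b)) = sup a (inf b c)"
    by (metis inf.absorb_iff2 inf_commute inf_le2 sup_absorb1 sup_assoc sup_inf_absorb)
  finally show ?thesis by simp
qed

end

lemma pf_top: "prime_filter x \<Longrightarrow> top \<in> x" unfolding prime_filter_def by blast
lemma pf_bot: "prime_filter x \<Longrightarrow> bot \<notin> x" unfolding prime_filter_def by blast
lemma pf_up: "prime_filter x \<Longrightarrow> a \<in> x \<Longrightarrow> a \<le> b \<Longrightarrow> b \<in> x" unfolding prime_filter_def by blast
lemma pf_inf: "prime_filter x \<Longrightarrow> inf a b \<in> x \<longleftrightarrow> a \<in> x \<and> b \<in> x"
  unfolding prime_filter_def by (meson inf_le1 inf_le2)
lemma pf_sup: "prime_filter x \<Longrightarrow> sup a b \<in> x \<longleftrightarrow> a \<in> x \<or> b \<in> x"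
  unfolding prime_filter_def by (meson sup_ge1 sup_ge2)

lemma pf_Inf_fin: assumes "prime_filter x" shows "finite F \<Longrightarrow> F \<subseteq> x \<Longrightarrow> Inf F \<in> x"
proof (induction F rule: finite_induct)
  case empty then show ?case by (simp add: pf_top assms)
next
  case (insert a F) then show ?case by (simp add: pf_inf Inf_insert assms)
qed

lemma pf_Sup_fin: assumes "prime_filter x" shows "finite F \<Longrightarrow> Sup F \<in> x \<Longrightarrow> \<exists>a\<in>F. a \<in> x"
proof (induction F rule: finite_induct)
  case empty then show ?case by (simp add: pf_bot assms)
next
  case (insert a F) then show ?case by (auto simp add: pf_sup Sup_insert assms)
qed

definition filt :: "'a::complete_lattice set \<Rightarrow> bool" where
  "filt F \<longleftrightarrow> top \<in> F \<and> (\<forall>a b. a \<in> F \<and> a \<le> b \<longrightarrow> b \<in> F) \<and> (\<forall>a b. a \<in> F \<and> b \<in> F \<longrightarrow> inf a b \<in> F)"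

lemma filt_top: "filt F \<Longrightarrow> top \<in> F" unfolding filt_def by blast
lemma filt_up: "filt F \<Longrightarrow> a \<in> F \<Longrightarrow> a \<le> b \<Longrightarrow> b \<in> F" unfolding filt_def by blast
lemma filt_inf: "filt F \<Longrightarrow> a \<in> F \<Longrightarrow> b \<in> F \<Longrightarrow> inf a b \<in> F" unfolding filt_def by blast

context frm begin

lemma PFT:
  assumes H: "\<And>C0 A0. finite C0 \<Longrightarrow> C0 \<subseteq> C \<Longrightarrow> finite A0 \<Longrightarrow> A0 \<subseteq> A \<Longrightarrow> \<not> Inf C0 \<le> Sup (A0::'a set)"
  shows "\<exists>x. prime_filter x \<and> C \<subseteq> x \<and> x \<inter> A = {}"
proof -
  define FF where "FF = {F. filt F \<and> C \<subseteq> F \<and> (\<forall>f\<in>F. \<forall>A0. finite A0 \<and> A0 \<subseteq> A \<longrightarrow> \<not> f \<le> Sup A0)}"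
  define F0 where "F0 = {y. \<exists>C0. finite C0 \<and> C0 \<subseteq> C \<and> Inf C0 \<le> y}"
  have "F0 \<in> FF"
  proof -
    have "filt F0" unfolding filt_def F0_def
    proof (intro conjI allI impI)
      show "top \<in> {y. \<exists>C0. finite C0 \<and> C0 \<subseteq> C \<and> Inf C0 \<le> y}" by (rule CollectI, rule exI[of _ "{}"]) simp
    next
      fix a b assume "a \<in> {y. \<exists>C0. finite C0 \<and> C0 \<subseteq> C \<and> Inf C0 \<le> y} \<and> a \<le> b"
      then show "b \<in> {y. \<exists>C0. finite C0 \<and> C0 \<subseteq> C \<and> Inf C0 \<le> y}" by (auto intro: order.trans)
    next
      fix a b assume "a \<in> {y. \<exists>C0. finite C0 \<and> C0 \<subseteq> C \<and> Inf C0 \<le> y} \<and> b \<in> {y. \<exists>C0. finite C0 \<and> C0 \<subseteq> C \<and> Inf C0 \<le> y}"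
      then obtain C1 C2 where "finite C1" "C1 \<subseteq> C" "Inf C1 \<le> a" "finite C2" "C2 \<subseteq> C" "Inf C2 \<le> b" by blast
      then show "inf a b \<in> {y. \<exists>C0. finite C0 \<and> C0 \<subseteq> C \<and> Inf C0 \<le> y}"
      proof (intro CollectI exI[of _ "C1 \<union> C2"] conjI)
        show "Inf (C1 \<union> C2) \<le> inf a b" unfolding Inf_union_distrib
          using \<open>Inf C1 \<le> a\<close> \<open>Inf C2 \<le> b\<close> by (rule inf_mono)
      qed (use \<open>finite C1\<close> \<open>finite C2\<close> \<open>C1 \<subseteq> C\<close> \<open>C2 \<subseteq> C\<close> in auto)
    qed
    moreover have "C \<subseteq> F0" unfolding F0_def
      by (auto intro!: exI[where x="{_}"])
    moreover have "\<forall>f\<in>F0. \<forall>A0. finite A0 \<and> A0 \<subseteq> A \<longrightarrow> \<not> f \<le> Sup A0"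
      unfolding F0_def by (auto dest: H intro: order.trans)
    ultimately show ?thesis unfolding FF_def by blast
  qed
  then have "FF \<noteq> {}" by blast
  moreover have "\<Union>CC \<in> FF" if ne: "CC \<noteq> {}" and ch: "subset.chain FF CC" for CC
  proof -
    have sub: "CC \<subseteq> FF" and tot: "\<forall>X\<in>CC. \<forall>Y\<in>CC. X \<subseteq> Y \<or> Y \<subseteq> X"
      using ch by (auto simp: subset_chain_def)
    have "filt (\<Union>CC)" unfolding filt_def
    proof (intro conjI allI impI)
      obtain X where "X \<in> CC" using ne by blast
      then have "filt X" using sub unfolding FF_def by blast
      then show "top \<in> \<Union>CC" using \<open>X \<in> CC\<close> filt_top by blast
    next
      fix a b assume ab: "a \<in> \<Union>CC \<and> a \<le> b"
      then obtain X where "X \<in> CC" "a \<in> X" by blast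
      then have "filt X" using sub unfolding FF_def by blast
      then show "b \<in> \<Union>CC" using \<open>X \<in> CC\<close> \<open>a \<in> X\<close> ab filt_up by blast
    next
      fix a b assume ab: "a \<in> \<Union>CC \<and> b \<in> \<Union>CC"
      then obtain X Y where XY: "X \<in> CC" "Y \<in> CC" "a \<in> X" "b \<in> Y" by blast
      show "inf a b \<in> \<Union>CC"
      proof (cases "X \<subseteq> Y")
        case True
        have "filt Y" using XY(2) sub unfolding FF_def by blast
        then have "inf a b \<in> Y" using True XY filt_inf by blast
        then show ?thesis using XY by blast
      next
        case False then have "Y \<subseteq> X" using tot XY by blast
        have "filt X" using XY(1) sub unfolding FF_def by blast
        then have "inf a b \<in> X" using \<open>Y \<subseteq> X\<close> XY filt_inf by blast
        then show ?thesis using XY by blast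
      qed
    qed
    moreover have "C \<subseteq> \<Union>CC" using ne sub unfolding FF_def by blast
    moreover have "\<forall>f\<in>\<Union>CC. \<forall>A0. finite A0 \<and> A0 \<subseteq> A \<longrightarrow> \<not> f \<le> Sup A0"
      using sub unfolding FF_def by blast
    ultimately show ?thesis unfolding FF_def by blast
  qed
  ultimately obtain M where M: "M \<in> FF" and max: "\<And>X. X \<in> FF \<Longrightarrow> M \<subseteq> X \<Longrightarrow> X = M"
    using subset_Zorn_nonempty[of FF] by blast
  have Mf: "filt M" and CM: "C \<subseteq> M" and Mdis: "\<And>f A0. f \<in> M \<Longrightarrow> finite A0 \<Longrightarrow> A0 \<subseteq> A \<Longrightarrow> \<not> f \<le> Sup A0"
    using M unfolding FF_def by blast+
  have ext: "\<exists>m\<in>M. \<exists>A1. finite A1 \<and> A1 \<subseteq> A \<and> inf m a \<le> Sup A1" if "a \<notin> M" for a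
  proof (rule ccontr)
    assume nex: "\<not> ?thesis"
    define Ma where "Ma = {y. \<exists>m\<in>M. inf m a \<le> y}"
    have "filt Ma" unfolding filt_def Ma_def
    proof (intro conjI allI impI)
      show "top \<in> {y. \<exists>m\<in>M. inf m a \<le> y}" using Mf unfolding filt_def by auto
    next
      fix u v assume "u \<in> {y. \<exists>m\<in>M. inf m a \<le> y} \<and> u \<le> v"
      then show "v \<in> {y. \<exists>m\<in>M. inf m a \<le> y}" by (auto intro: order.trans)
    next
      fix u v assume "u \<in> {y. \<exists>m\<in>M. inf m a \<le> y} \<and> v \<in> {y. \<exists>m\<in>M. inf m a \<le> y}"
      then obtain m1 m2 where "m1 \<in> M" "m2 \<in> M" "inf m1 a \<le> u" "inf m2 a \<le> v" by blast
      moreover have "inf (inf m1 m2) a \<le> inf u v" using calculation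
        by (meson inf.bounded_iff inf_le1 inf_le2 order_trans)
      moreover have "inf m1 m2 \<in> M" using calculation Mf unfolding filt_def by blast
      ultimately show "inf u v \<in> {y. \<exists>m\<in>M. inf m a \<le> y}" by blast
    qed
    moreover have MMa: "M \<subseteq> Ma" unfolding Ma_def by (auto intro: le_infI1)
    moreover have "\<forall>f\<in>Ma. \<forall>A0. finite A0 \<and> A0 \<subseteq> A \<longrightarrow> \<not> f \<le> Sup A0"
      using nex unfolding Ma_def by (auto intro: order.trans)
    ultimately have "Ma \<in> FF" using CM unfolding FF_def by blast
    then have "Ma = M" using max MMa by blast
    moreover have "a \<in> Ma" unfolding Ma_def using Mf unfolding filt_def by auto
    ultimately show False using that by blast
  qed
  have "prime_filter M" unfolding prime_filter_def
  proof (intro conjI allI impI)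
    show "top \<in> M" using Mf unfolding filt_def by blast
    show "bot \<notin> M" using Mdis[of bot "{}"] by auto
  next
    fix a b assume "a \<in> M \<and> a \<le> b" then show "b \<in> M" using Mf unfolding filt_def by blast
  next
    fix a b assume "a \<in> M \<and> b \<in> M" then show "inf a b \<in> M" using Mf unfolding filt_def by blast
  next
    fix a b assume ab: "sup a b \<in> M"
    show "a \<in> M \<or> b \<in> M"
    proof (rule ccontr)
      assume "\<not> (a \<in> M \<or> b \<in> M)"
      then obtain m1 A1 m2 A2 where "m1 \<in> M" "finite A1" "A1 \<subseteq> A" "inf m1 a \<le> Sup A1"
        "m2 \<in> M" "finite A2" "A2 \<subseteq> A" "inf m2 b \<le> Sup A2" using ext[of a] ext[of b] by blast
      moreover have "inf (inf m1 m2) (sup a b) \<in> M" using calculation ab Mf unfolding filt_def by blast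
      moreover have "inf (inf m1 m2) (sup a b) \<le> Sup (A1 \<union> A2)"
      proof -
        have "inf (inf m1 m2) (sup a b) = sup (inf (inf m1 m2) a) (inf (inf m1 m2) b)" by (rule distr)
        also have "\<dots> \<le> sup (Sup A1) (Sup A2)" using calculation
          by (meson inf_le1 inf_le2 le_infI order_trans sup_mono \<open>inf m1 a \<le> Sup A1\<close> \<open>inf m2 b \<le> Sup A2\<close>)
        finally show ?thesis by (simp add: Sup_union_distrib)
      qed
      ultimately show False using Mdis[of _ "A1 \<union> A2"] by blast
    qed
  qed
  moreover have "M \<inter> A = {}"
  proof (rule ccontr)
    assume "M \<inter> A \<noteq> {}" then obtain a where "a \<in> M" "a \<in> A" by blast
    then show False using Mdis[of a "{a}"] by simp
  qed
  ultimately show ?thesis using CM by blast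
qed

lemma sep: "\<not> (a::'a) \<le> b \<Longrightarrow> \<exists>x. prime_filter x \<and> a \<in> x \<and> b \<notin> x"
proof -
  assume nab: "\<not> a \<le> b"
  have "\<exists>x. prime_filter x \<and> {a} \<subseteq> x \<and> x \<inter> {b} = {}"
  proof (rule PFT)
    fix C0 A0 :: "'a set" assume "finite C0" "C0 \<subseteq> {a}" "finite A0" "A0 \<subseteq> {b}"
    then have "a \<le> Inf C0" "Sup A0 \<le> b" by (auto intro: Inf_greatest Sup_least)
    then show "\<not> Inf C0 \<le> Sup A0" using nab by (meson order.trans)
  qed
  then show ?thesis by blast
qed

lemma phi_le: "stone_map a \<subseteq> stone_map b \<longleftrightarrow> (a::'a) \<le> b"
  unfolding stone_map_def using sep pf_up by blast

end



definition Bs :: "'a::complete_lattice \<Rightarrow> 'a \<Rightarrow> 'a set set" where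
  "Bs b c = stone_map b - stone_map c"

definition covers :: "('a::complete_lattice \<times> 'a) set \<Rightarrow> bool" where
  "covers Q \<longleftrightarrow> (\<forall>x. prime_filter x \<longrightarrow> (\<exists>p\<in>Q. fst p \<in> x \<and> snd p \<notin> x))"

lemma covers_mono: "covers Q \<Longrightarrow> Q \<subseteq> Q' \<Longrightarrow> covers Q'"
  unfolding covers_def by blast

lemma Bs_mem: "x \<in> Bs b c \<longleftrightarrow> prime_filter x \<and> b \<in> x \<and> c \<notin> x"
  unfolding Bs_def stone_map_def by auto

lemma phi_mem: "x \<in> stone_map a \<longleftrightarrow> prime_filter x \<and> a \<in> x"
  unfolding stone_map_def by auto

lemma Bs_Int: "Bs b1 c1 \<inter> Bs b2 c2 = Bs (inf b1 b2) (sup c1 c2)"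
  unfolding Bs_def stone_map_def using pf_inf pf_sup by blast

lemma XL_points_eq: "XL_points t = {x. prime_filter x}"
  unfolding XL_points_def by simp

lemma topspace_XT: "topspace (XL_topology t) = {x. prime_filter x}"
proof -
  have "\<Union>(range (\<lambda>a::'a. {x. a \<in> x}) \<union> range (\<lambda>a::'a. {x. a \<notin> x})) = UNIV" by blast
  then show ?thesis unfolding XL_topology_def XL_points_def
    by (simp only: topspace_subtopology topology_generated_by_topspace) simp
qed

lemma gen_open_basic:
  assumes "generate_topology_on (range (\<lambda>a::'a::complete_lattice. {x. a \<in> x}) \<union> range (\<lambda>a::'a. {x. a \<notin> x})) T"
  shows "\<forall>x\<in>T. prime_filter x \<longrightarrow> (\<exists>b c. x \<in> Bs b c \<and> Bs b c \<subseteq> T)"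
  using assms
proof (induction rule: generate_topology_on.induct)
  case Empty then show ?case by simp
next
  case (Int U V)
  show ?case
  proof (intro ballI impI)
    fix x assume "x \<in> U \<inter> V" "prime_filter x"
    then obtain b1 c1 b2 c2 where "x \<in> Bs b1 c1" "Bs b1 c1 \<subseteq> U" "x \<in> Bs b2 c2" "Bs b2 c2 \<subseteq> V"
      using Int.IH by blast
    then show "\<exists>b c. x \<in> Bs b c \<and> Bs b c \<subseteq> U \<inter> V"
      by (intro exI[of _ "inf b1 b2"] exI[of _ "sup c1 c2"]) (auto simp flip: Bs_Int)
  qed
next
  case (UN K) then show ?case by blast
next
  case (Basis s)
  then show ?case
  proof
    assume "s \<in> range (\<lambda>a::'a. {x. a \<in> x})"
    then obtain a where s: "s = {x. a \<in> x}" by blast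
    show ?thesis unfolding s by (intro ballI impI exI[of _ a] exI[of _ bot]) (auto simp: Bs_mem pf_bot)
  next
    assume "s \<in> range (\<lambda>a::'a. {x. a \<notin> x})"
    then obtain a where s: "s = {x. a \<notin> x}" by blast
    show ?thesis unfolding s by (intro ballI impI exI[of _ top] exI[of _ a]) (auto simp: Bs_mem pf_top)
  qed
qed

lemma openin_XT: "openin (XL_topology t) U \<longleftrightarrow>
   U \<subseteq> {x. prime_filter x} \<and> (\<forall>x\<in>U. \<exists>b c. x \<in> Bs b c \<and> Bs b c \<subseteq> (U::'a::complete_lattice set set))"
proof
  assume "openin (XL_topology t) U"
  then obtain T where T: "openin (topology_generated_by (range (\<lambda>a::'a. {x. a \<in> x}) \<union> range (\<lambda>a::'a. {x. a \<notin> x}))) T"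
    "U = T \<inter> XL_points t"
    unfolding XL_topology_def openin_subtopology by blast
  then have g: "generate_topology_on (range (\<lambda>a::'a. {x. a \<in> x}) \<union> range (\<lambda>a::'a. {x. a \<notin> x})) T"
    by (simp add: openin_topology_generated_by_iff)
  have "\<forall>x\<in>U. \<exists>b c. x \<in> Bs b c \<and> Bs b c \<subseteq> U"
  proof
    fix x assume "x \<in> U"
    then have "x \<in> T" "prime_filter x" using T(2) by (auto simp: XL_points_def)
    then obtain b c where "x \<in> Bs b c" "Bs b c \<subseteq> T" using gen_open_basic[OF g] by blast
    moreover have "Bs b c \<subseteq> XL_points t" by (auto simp: Bs_mem XL_points_def)
    ultimately show "\<exists>b c. x \<in> Bs b c \<and> Bs b c \<subseteq> U" using T(2) by blast
  qed
  then show "U \<subseteq> {x. prime_filter x} \<and> (\<forall>x\<in>U. \<exists>b c. x \<in> Bs b c \<and> Bs b c \<subseteq> U)"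
    using T(2) by (auto simp: XL_points_def)
next
  assume R: "U \<subseteq> {x. prime_filter x} \<and> (\<forall>x\<in>U. \<exists>b c. x \<in> Bs b c \<and> Bs b c \<subseteq> U)"
  have oB: "openin (XL_topology t) (Bs b c)" for b c :: 'a
  proof -
    let ?S = "range (\<lambda>a::'a. {x. a \<in> x}) \<union> range (\<lambda>a::'a. {x. a \<notin> x})"
    have "generate_topology_on ?S ({x. b \<in> x} \<inter> {x. c \<notin> x})"
      by (intro generate_topology_on.Int generate_topology_on.Basis) auto
    then have "openin (topology_generated_by ?S) ({x. b \<in> x} \<inter> {x. c \<notin> x})"
      by (simp add: openin_topology_generated_by_iff)
    moreover have "Bs b c = ({x. b \<in> x} \<inter> {x. c \<notin> x}) \<inter> XL_points t"
      by (auto simp: Bs_mem XL_points_def)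
    ultimately show ?thesis unfolding XL_topology_def openin_subtopology by blast
  qed
  show "openin (XL_topology t) U"
    using R oB by (subst openin_subopen) blast
qed

lemma open_Bs: "openin (XL_topology t) (Bs b (c::'a::complete_lattice))"
proof -
  have "Bs b c \<subseteq> {x. prime_filter x}" by (auto simp: Bs_mem)
  then show ?thesis unfolding openin_XT by blast
qed

lemma phi_Bs: "stone_map a = Bs a (bot::'a::complete_lattice)"
  by (auto simp: Bs_mem phi_mem pf_bot)

lemma nphi_Bs: "{x. prime_filter x} - stone_map a = Bs (top::'a::complete_lattice) a"
  by (auto simp: Bs_mem phi_mem pf_top)

lemma open_phi: "openin (XL_topology t) (stone_map (a::'a::complete_lattice))"
  using open_Bs phi_Bs by metis

lemma open_nphi: "openin (XL_topology t) ({x. prime_filter x} - stone_map (a::'a::complete_lattice))"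
  using open_Bs nphi_Bs by metis

lemma closed_phi: "closedin (XL_topology t) (stone_map (a::'a::complete_lattice))"
  unfolding closedin_def topspace_XT using open_nphi by (auto simp: phi_mem)

lemma closed_nphi: "closedin (XL_topology t) ({x. prime_filter x} - stone_map (a::'a::complete_lattice))"
proof -
  have "{x. prime_filter x} - ({x. prime_filter x} - stone_map a) = stone_map a" by (auto simp: phi_mem)
  then show ?thesis unfolding closedin_def topspace_XT using open_phi by auto
qed

lemma closed_Bs: "closedin (XL_topology t) (Bs b (c::'a::complete_lattice))"
proof -
  have "Bs b c = stone_map b \<inter> ({x. prime_filter x} - stone_map c)" by (auto simp: Bs_mem phi_mem)
  then show ?thesis using closed_phi closed_nphi closedin_Int by metis
qed

lemma clopen_phi: "clopenin (XL_topology t) (stone_map (a::'a::complete_lattice))"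
  unfolding clopenin_def using open_phi closed_phi by blast

context frm begin

lemma compact_pairs:
  assumes cov: "covers (P::('a \<times> 'a) set)"
  shows "\<exists>P0. finite P0 \<and> P0 \<subseteq> P \<and> covers P0"
proof (rule ccontr)
  assume nP: "\<not> ?thesis"
  define FF where "FF = {Q. P \<subseteq> Q \<and> (\<forall>Q0. finite Q0 \<and> Q0 \<subseteq> Q \<longrightarrow> \<not> covers Q0)}"
  have "P \<in> FF" using nP unfolding FF_def by blast
  then have "FF \<noteq> {}" by blast
  moreover have "\<Union>CC \<in> FF" if ne: "CC \<noteq> {}" and ch: "subset.chain FF CC" for CC
  proof -
    have sub: "CC \<subseteq> FF" using ch by (auto simp: subset_chain_def)
    have "P \<subseteq> \<Union>CC" using ne sub unfolding FF_def by blast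
    moreover have "\<not> covers Q0" if q: "finite Q0" "Q0 \<subseteq> \<Union>CC" for Q0
    proof -
      obtain Q where "Q \<in> CC" "Q0 \<subseteq> Q" using finite_subset_Union_chain[OF q ne ch] by blast
      then show ?thesis using sub q(1) unfolding FF_def by blast
    qed
    ultimately show ?thesis unfolding FF_def by blast
  qed
  ultimately obtain M where M: "M \<in> FF" and max: "\<And>Y. Y \<in> FF \<Longrightarrow> M \<subseteq> Y \<Longrightarrow> Y = M"
    using subset_Zorn_nonempty[of FF] by blast
  have PM: "P \<subseteq> M" and Mnc: "\<And>Q0. finite Q0 \<Longrightarrow> Q0 \<subseteq> M \<Longrightarrow> \<not> covers Q0"
    using M unfolding FF_def by blast+
  have addp: "\<exists>F1. finite F1 \<and> F1 \<subseteq> M \<and> covers (insert p F1)" if "p \<notin> M" for p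
  proof -
    have "insert p M \<notin> FF" using max[of "insert p M"] that by blast
    then obtain Q0 where "finite Q0" "Q0 \<subseteq> insert p M" "covers Q0" using PM unfolding FF_def by blast
    then show ?thesis
      by (intro exI[of _ "Q0 - {p}"]) (auto elim: covers_mono)
  qed
  have key: "(\<exists>a. (a, bot) \<in> M \<and> a \<in> x) \<or> (\<exists>c. (top, c) \<in> M \<and> c \<notin> x)" if px: "prime_filter x" for x
  proof (rule ccontr)
    assume nk: "\<not> ?thesis"
    obtain p where p: "p \<in> M" "fst p \<in> x" "snd p \<notin> x" using cov px PM unfolding covers_def by blast
    obtain b c where bc: "p = (b, c)" by (cases p)
    have "(b, bot) \<notin> M" using nk p bc by auto
    then obtain F1 where F1: "finite F1" "F1 \<subseteq> M" "covers (insert (b, bot) F1)" using addp by blast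
    have "(top, c) \<notin> M" using nk p bc by auto
    then obtain F2 where F2: "finite F2" "F2 \<subseteq> M" "covers (insert (top, c) F2)" using addp by blast
    have "covers (insert (b, c) (F1 \<union> F2))" unfolding covers_def
    proof (intro allI impI)
      fix y :: "'a set" assume py: "prime_filter y"
      from F1(3) py obtain q1 where q1: "q1 \<in> insert (b, bot) F1" "fst q1 \<in> y" "snd q1 \<notin> y"
        unfolding covers_def by blast
      from F2(3) py obtain q2 where q2: "q2 \<in> insert (top, c) F2" "fst q2 \<in> y" "snd q2 \<notin> y"
        unfolding covers_def by blast
      show "\<exists>q\<in>insert (b, c) (F1 \<union> F2). fst q \<in> y \<and> snd q \<notin> y"
      proof (cases "q1 \<in> F1 \<or> q2 \<in> F2")
        case True then show ?thesis using q1 q2 by blast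
      next
        case False then have "q1 = (b, bot)" "q2 = (top, c)" using q1 q2 by auto
        then have "b \<in> y" "c \<notin> y" using q1 q2 by auto
        then show ?thesis by (intro bexI[of _ "(b, c)"]) auto
      qed
    qed
    moreover have "insert (b, c) (F1 \<union> F2) \<subseteq> M" using F1 F2 p bc by auto
    moreover have "finite (insert (b, c) (F1 \<union> F2))" using F1(1) F2(1) by simp
    ultimately show False using Mnc by blast
  qed
  define A where "A = {a. (a, bot) \<in> M}"
  define C where "C = {c. (top, c) \<in> M}"
  have "\<exists>x. prime_filter x \<and> C \<subseteq> x \<and> x \<inter> A = {}"
  proof (rule PFT)
    fix C0 A0 assume fin: "finite C0" "C0 \<subseteq> C" "finite A0" "A0 \<subseteq> A"
    show "\<not> Inf C0 \<le> Sup A0"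
    proof
      assume le: "Inf C0 \<le> Sup A0"
      let ?Q = "(\<lambda>a. (a, bot)) ` A0 \<union> (\<lambda>c. (top, c)) ` C0"
      have cQ: "covers ?Q" unfolding covers_def
      proof (intro allI impI)
        fix y :: "'a set" assume py: "prime_filter y"
        show "\<exists>q\<in>?Q. fst q \<in> y \<and> snd q \<notin> y"
        proof (cases "C0 \<subseteq> y")
          case True
          then have "Inf C0 \<in> y" by (rule pf_Inf_fin[OF py fin(1)])
          then have "Sup A0 \<in> y" by (rule pf_up[OF py _ le])
          then obtain a where "a \<in> A0" "a \<in> y" using pf_Sup_fin[OF py fin(3)] by blast
          then show ?thesis by (intro bexI[of _ "(a, bot)"]) (auto simp: pf_bot[OF py])
        next
          case False
          then obtain c where "c \<in> C0" "c \<notin> y" by blast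
          then show ?thesis by (intro bexI[of _ "(top, c)"]) (auto simp: pf_top[OF py])
        qed
      qed
      have fQ: "finite ?Q" using fin(1) fin(3) by simp
      have Q1: "(\<lambda>a. (a, bot)) ` A0 \<subseteq> M" using fin(4) unfolding A_def by blast
      have Q2: "(\<lambda>c. (top, c)) ` C0 \<subseteq> M" using fin(2) unfolding C_def by blast
      have "?Q \<subseteq> M" using Q1 Q2 by (rule Un_least)
      then have "\<not> covers ?Q" by (rule Mnc[OF fQ])
      then show False using cQ by contradiction
    qed
  qed
  then obtain x where x: "prime_filter x" "C \<subseteq> x" "x \<inter> A = {}" by blast
  from key[OF x(1)] show False
  proof
    assume "\<exists>a. (a, bot) \<in> M \<and> a \<in> x"
    then obtain a where "(a, bot) \<in> M" "a \<in> x" by blast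
    then have "a \<in> A" unfolding A_def by simp
    then show False using x(3) \<open>a \<in> x\<close> by blast
  next
    assume "\<exists>c. (top, c) \<in> M \<and> c \<notin> x"
    then obtain c where "(top, c) \<in> M" "c \<notin> x" by blast
    then have "c \<in> C" unfolding C_def by simp
    then show False using x(2) \<open>c \<notin> x\<close> by blast
  qed
qed

lemma compact_XT: "compact_space (XL_topology t)"
  unfolding compact_space_def compactin_def
proof (intro conjI allI impI)
  show "topspace (XL_topology t) \<subseteq> topspace (XL_topology t)" by simp
next
  fix UU assume UU: "(\<forall>U\<in>UU. openin (XL_topology t) U) \<and> topspace (XL_topology t) \<subseteq> \<Union>UU"
  define P where "P = {p. \<exists>U\<in>UU. Bs (fst p) (snd p) \<subseteq> (U::'a set set)}"
  have "covers P" unfolding covers_def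
  proof (intro allI impI)
    fix x :: "'a set" assume px: "prime_filter x"
    then have "x \<in> topspace (XL_topology t)" by (simp add: topspace_XT)
    then obtain U where U: "U \<in> UU" "x \<in> U" using UU by blast
    then have "openin (XL_topology t) U" using UU by blast
    then have "\<forall>x\<in>U. \<exists>b c. x \<in> Bs b c \<and> Bs b c \<subseteq> U" unfolding openin_XT by (rule conjunct2)
    then obtain b c where bc: "x \<in> Bs b c" "Bs b c \<subseteq> U" using U(2) by blast
    then have "(b, c) \<in> P" unfolding P_def using U(1) by auto
    moreover have "b \<in> x" "c \<notin> x" using bc(1) by (simp_all add: Bs_mem)
    ultimately show "\<exists>p\<in>P. fst p \<in> x \<and> snd p \<notin> x" by (intro bexI[of _ "(b, c)"]) simp_all
  qed
  then obtain P0 where P0: "finite P0" "P0 \<subseteq> P" "covers P0" using compact_pairs by blast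
  have "\<forall>p\<in>P0. \<exists>U. U \<in> UU \<and> Bs (fst p) (snd p) \<subseteq> U" using P0(2) unfolding P_def by blast
  then obtain f where f: "\<forall>p\<in>P0. f p \<in> UU \<and> Bs (fst p) (snd p) \<subseteq> f p" by (metis bchoice)
  show "\<exists>F. finite F \<and> F \<subseteq> UU \<and> topspace (XL_topology t) \<subseteq> \<Union>F"
  proof (intro exI[of _ "f ` P0"] conjI)
    show "finite (f ` P0)" using P0(1) by simp
    show "f ` P0 \<subseteq> UU" using f by blast
    show "topspace (XL_topology t) \<subseteq> \<Union>(f ` P0)"
    proof
      fix x assume "x \<in> topspace (XL_topology t)"
      then have px: "prime_filter x" by (simp add: topspace_XT)
      then obtain p where p: "p \<in> P0" "fst p \<in> x" "snd p \<notin> x" using P0(3) unfolding covers_def by blast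
      then have "x \<in> Bs (fst p) (snd p)" using px by (simp add: Bs_mem)
      then have "x \<in> f p" using f p(1) by blast
      then show "x \<in> \<Union>(f ` P0)" using p(1) by blast
    qed
  qed
qed

end



context frm begin

lemma closure_Sup:
  "XL_topology t closure_of (\<Union>(stone_map ` S)) = stone_map (Sup (S::'a set))"
proof
  show "XL_topology t closure_of (\<Union>(stone_map ` S)) \<subseteq> stone_map (Sup S)"
  proof
    fix x assume x: "x \<in> XL_topology t closure_of (\<Union>(stone_map ` S))"
    then have px: "prime_filter x" and cl: "\<And>T. x \<in> T \<Longrightarrow> openin (XL_topology t) T \<Longrightarrow> \<exists>y\<in>\<Union>(stone_map ` S). y \<in> T"
      unfolding closure_of_def topspace_XT by blast+
    show "x \<in> stone_map (Sup S)"
    proof (rule ccontr)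
      assume "x \<notin> stone_map (Sup S)"
      then have "x \<in> {x. prime_filter x} - stone_map (Sup S)" using px by simp
      from cl[OF this open_nphi] obtain y s where "s \<in> S" "y \<in> stone_map s" "y \<notin> stone_map (Sup S)" by blast
      moreover have "s \<le> Sup S" using \<open>s \<in> S\<close> by (rule Sup_upper)
      ultimately show False using pf_up by (auto simp: phi_mem)
    qed
  qed
next
  show "stone_map (Sup S) \<subseteq> XL_topology t closure_of (\<Union>(stone_map ` S))"
  proof
    fix x assume x: "x \<in> stone_map (Sup S)"
    then have px: "prime_filter x" and sx: "Sup S \<in> x" by (simp_all add: phi_mem)
    show "x \<in> XL_topology t closure_of (\<Union>(stone_map ` S))"
      unfolding closure_of_def topspace_XT
    proof (intro CollectI conjI allI impI)
      show "prime_filter x" by (rule px)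
    next
      fix T assume T: "x \<in> T \<and> openin (XL_topology t) T"
      then have "\<forall>x\<in>T. \<exists>b c. x \<in> Bs b c \<and> Bs b c \<subseteq> T" unfolding openin_XT by (rule conjunct2[OF conjunct2])
      then obtain b c where bc: "x \<in> Bs b c" "Bs b c \<subseteq> T" using T by blast
      then have bx: "b \<in> x" and cx: "c \<notin> x" by (simp_all add: Bs_mem)
      have "inf b (Sup S) \<in> x" using bx sx pf_inf[OF px] by blast
      then have "\<not> inf b (Sup S) \<le> c" using cx pf_up[OF px] by blast
      then have "\<not> Sup ((\<lambda>s. inf b s) ` S) \<le> c" by (simp add: inf_Sup)
      then obtain s where s: "s \<in> S" "\<not> inf b s \<le> c" by (meson SUP_least)
      then obtain y where y: "prime_filter y" "inf b s \<in> y" "c \<notin> y" using sep by blast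
      then have "y \<in> Bs b c" "y \<in> stone_map s" using pf_inf[OF y(1)] by (simp_all add: Bs_mem phi_mem)
      then show "\<exists>y\<in>\<Union>(stone_map ` S). y \<in> T" using bc(2) s(1) by blast
    qed
  qed
qed

lemma phi_upset: "is_upset (XL_topology t) (\<subseteq>) (stone_map (a::'a))"
  unfolding is_upset_def topspace_XT by (auto simp: phi_mem)

lemma open_upset_phi:
  assumes U: "openin (XL_topology t) U" "is_upset (XL_topology t) (\<subseteq>) U" and xU: "x \<in> U"
  shows "\<exists>a::'a. x \<in> stone_map a \<and> stone_map a \<subseteq> U"
proof -
  have Usub: "U \<subseteq> {x. prime_filter x}" and Ub: "\<forall>x\<in>U. \<exists>b c. x \<in> Bs b c \<and> Bs b c \<subseteq> U"
    using U(1) unfolding openin_XT by blast+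
  have up: "\<And>x y. x \<in> U \<Longrightarrow> prime_filter y \<Longrightarrow> x \<subseteq> y \<Longrightarrow> y \<in> U"
    using U(2) unfolding is_upset_def topspace_XT by blast
  have px: "prime_filter x" using xU Usub by blast
  define P where "P = {p. Bs (fst p) (snd p) \<subseteq> U} \<union> {p. fst p = top \<and> snd p \<in> x}"
  have "covers P" unfolding covers_def
  proof (intro allI impI)
    fix y :: "'a set" assume py: "prime_filter y"
    show "\<exists>p\<in>P. fst p \<in> y \<and> snd p \<notin> y"
    proof (cases "y \<in> U")
      case True
      then obtain b c where "y \<in> Bs b c" "Bs b c \<subseteq> U" using Ub by blast
      then show ?thesis unfolding P_def by (intro bexI[of _ "(b, c)"]) (auto simp: Bs_mem)
    next
      case False
      then have "\<not> x \<subseteq> y" using up xU py by blast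
      then obtain a where "a \<in> x" "a \<notin> y" by blast
      then show ?thesis unfolding P_def by (intro bexI[of _ "(top, a)"]) (auto simp: pf_top[OF py])
    qed
  qed
  then obtain P0 where P0: "finite P0" "P0 \<subseteq> P" "covers P0" using compact_pairs by blast
  define A0 where "A0 = snd ` (P0 \<inter> {p. fst p = top \<and> snd p \<in> x})"
  have fA0: "finite A0" unfolding A0_def using P0(1) by simp
  have A0x: "A0 \<subseteq> x" unfolding A0_def by auto
  have ax: "Inf A0 \<in> x" by (rule pf_Inf_fin[OF px fA0 A0x])
  have "stone_map (Inf A0) \<subseteq> U"
  proof
    fix y assume "y \<in> stone_map (Inf A0)"
    then have py: "prime_filter y" and ay: "Inf A0 \<in> y" by (simp_all add: phi_mem)
    show "y \<in> U"
    proof (rule ccontr)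
      assume yU: "y \<notin> U"
      obtain p where p: "p \<in> P0" "fst p \<in> y" "snd p \<notin> y" using P0(3) py unfolding covers_def by blast
      have "y \<in> Bs (fst p) (snd p)" using p py by (simp add: Bs_mem)
      then have "\<not> Bs (fst p) (snd p) \<subseteq> U" using yU by blast
      then have "fst p = top \<and> snd p \<in> x" using p(1) P0(2) unfolding P_def by blast
      then have "snd p \<in> A0" unfolding A0_def using p(1) by blast
      then have "Inf A0 \<le> snd p" by (rule Inf_lower)
      then have "snd p \<in> y" using pf_up[OF py ay] by blast
      then show False using p(3) by contradiction
    qed
  qed
  then show ?thesis using ax px by (intro exI[of _ "Inf A0"]) (simp add: phi_mem)
qed

lemma clopen_upset_phi:
  assumes U: "clopenin (XL_topology t) U" "is_upset (XL_topology t) (\<subseteq>) U"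
  shows "\<exists>a::'a. U = stone_map a"
proof -
  have Uo: "openin (XL_topology t) U" and Uc: "closedin (XL_topology t) U" using U(1) unfolding clopenin_def by blast+
  have Usub: "U \<subseteq> {x. prime_filter x}" using Uo unfolding openin_XT by blast
  have "openin (XL_topology t) ({x. prime_filter x} - U)" using Uc unfolding closedin_def topspace_XT by blast
  then have Vb: "\<forall>x\<in>{x. prime_filter x} - U. \<exists>b c. x \<in> Bs b c \<and> Bs b c \<subseteq> {x. prime_filter x} - U"
    unfolding openin_XT by (rule conjunct2)
  define P where "P = {p. snd p = bot \<and> stone_map (fst p) \<subseteq> U} \<union> {p. Bs (fst p) (snd p) \<subseteq> {x. prime_filter x} - U}"
  have "covers P" unfolding covers_def
  proof (intro allI impI)
    fix y :: "'a set" assume py: "prime_filter y"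
    show "\<exists>p\<in>P. fst p \<in> y \<and> snd p \<notin> y"
    proof (cases "y \<in> U")
      case True
      then obtain a where "y \<in> stone_map a" "stone_map a \<subseteq> U" using open_upset_phi[OF Uo U(2)] by blast
      then show ?thesis unfolding P_def by (intro bexI[of _ "(a, bot)"]) (auto simp: phi_mem pf_bot[OF py])
    next
      case False
      then obtain b c where "y \<in> Bs b c" "Bs b c \<subseteq> {x. prime_filter x} - U" using Vb py by blast
      then show ?thesis unfolding P_def by (intro bexI[of _ "(b, c)"]) (auto simp: Bs_mem)
    qed
  qed
  then obtain P0 where P0: "finite P0" "P0 \<subseteq> P" "covers P0" using compact_pairs by blast
  define A0 where "A0 = fst ` (P0 \<inter> {p. snd p = bot \<and> stone_map (fst p) \<subseteq> U})"
  have fA0: "finite A0" unfolding A0_def using P0(1) by simp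
  have "U = stone_map (Sup A0)"
  proof
    show "U \<subseteq> stone_map (Sup A0)"
    proof
      fix y assume yU: "y \<in> U"
      then have py: "prime_filter y" using Usub by blast
      obtain p where p: "p \<in> P0" "fst p \<in> y" "snd p \<notin> y" using P0(3) py unfolding covers_def by blast
      have "y \<in> Bs (fst p) (snd p)" using p py by (simp add: Bs_mem)
      then have "\<not> Bs (fst p) (snd p) \<subseteq> {x. prime_filter x} - U" using yU by blast
      then have "snd p = bot \<and> stone_map (fst p) \<subseteq> U" using p(1) P0(2) unfolding P_def by blast
      then have "fst p \<in> A0" unfolding A0_def using p(1) by blast
      then have "fst p \<le> Sup A0" by (rule Sup_upper)
      then have "Sup A0 \<in> y" using pf_up[OF py p(2)] by blast
      then show "y \<in> stone_map (Sup A0)" using py by (simp add: phi_mem)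
    qed
  next
    show "stone_map (Sup A0) \<subseteq> U"
    proof
      fix y assume "y \<in> stone_map (Sup A0)"
      then have py: "prime_filter y" and sy: "Sup A0 \<in> y" by (simp_all add: phi_mem)
      obtain a where "a \<in> A0" "a \<in> y" using pf_Sup_fin[OF py fA0 sy] by blast
      then have "stone_map a \<subseteq> U" "y \<in> stone_map a" unfolding A0_def using py by (auto simp: phi_mem)
      then show "y \<in> U" by blast
    qed
  qed
  then show ?thesis by blast
qed

lemma ClopUp_char: "ClopUp (XL_topology t) (\<subseteq>) = range (stone_map :: 'a \<Rightarrow> _)"
proof
  show "ClopUp (XL_topology t) (\<subseteq>) \<subseteq> range (stone_map :: 'a \<Rightarrow> _)"
    unfolding ClopUp_def using clopen_upset_phi by blast
  show "range (stone_map :: 'a \<Rightarrow> _) \<subseteq> ClopUp (XL_topology t) (\<subseteq>)"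
    unfolding ClopUp_def using clopen_phi phi_upset by blast
qed

end



lemma fin_chain_Sup_in:
  fixes T :: "'a::complete_lattice set"
  shows "finite T \<Longrightarrow> T \<noteq> {} \<Longrightarrow> (\<forall>a\<in>T. \<forall>b\<in>T. a \<le> b \<or> b \<le> a) \<Longrightarrow> Sup T \<in> T"
proof (induction T rule: finite_ne_induct)
  case (singleton x) then show ?case by simp
next
  case (insert x F)
  then have sF: "Sup F \<in> F" by blast
  then have "x \<le> Sup F \<or> Sup F \<le> x" using insert.prems by blast
  then show ?case
  proof
    assume "x \<le> Sup F" then have "Sup (insert x F) = Sup F" by (simp add: Sup_insert sup.absorb2)
    then show ?thesis using sF by simp
  next
    assume "Sup F \<le> x" then have "Sup (insert x F) = x" by (simp add: Sup_insert sup.absorb1)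
    then show ?thesis by simp
  qed
qed

context frm begin

lemma down_set_single: "down_set (XL_topology t) (\<subseteq>) {y} = {z. prime_filter z \<and> z \<subseteq> y}"
  unfolding down_set_def topspace_XT by blast

lemma cp_spatial:
  assumes py: "prime_filter y" and p: "(p::'a) \<notin> y" and le: "\<And>a. a \<notin> y \<Longrightarrow> a \<le> p"
  shows "y \<in> spatial_part (XL_topology t) (\<subseteq>)"
proof -
  have "down_set (XL_topology t) (\<subseteq>) {y} = {x. prime_filter x} - stone_map p"
  proof
    show "down_set (XL_topology t) (\<subseteq>) {y} \<subseteq> {x. prime_filter x} - stone_map p"
      unfolding down_set_single using p by (auto simp: phi_mem)
  next
    show "{x. prime_filter x} - stone_map p \<subseteq> down_set (XL_topology t) (\<subseteq>) {y}"
    proof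
      fix z assume "z \<in> {x. prime_filter x} - stone_map p"
      then have pz: "prime_filter z" and pnz: "p \<notin> z" by (auto simp: phi_mem)
      have "z \<subseteq> y"
      proof
        fix a assume az: "a \<in> z"
        show "a \<in> y"
        proof (rule ccontr)
          assume "a \<notin> y" then have "a \<le> p" by (rule le)
          then have "p \<in> z" using pf_up[OF pz az] by blast
          then show False using pnz by contradiction
        qed
      qed
      then show "z \<in> down_set (XL_topology t) (\<subseteq>) {y}" unfolding down_set_single using pz by blast
    qed
  qed
  then have "clopenin (XL_topology t) (down_set (XL_topology t) (\<subseteq>) {y})"
    unfolding clopenin_def using open_nphi closed_nphi by metis
  then show ?thesis unfolding spatial_part_def topspace_XT using py by blast
qed

lemma spatial_cp:
  assumes y: "y \<in> spatial_part (XL_topology t) (\<subseteq>)"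
  shows "\<exists>p::'a. p \<notin> y \<and> (\<forall>a. a \<notin> y \<longrightarrow> a \<le> p)"
proof -
  have py: "prime_filter y" and cD: "clopenin (XL_topology t) (down_set (XL_topology t) (\<subseteq>) {y})"
    using y unfolding spatial_part_def topspace_XT by blast+
  define D where "D = {z. prime_filter z \<and> z \<subseteq> (y::'a set)}"
  have cD': "clopenin (XL_topology t) D" using cD unfolding D_def down_set_single by simp
  have Dsub: "D \<subseteq> {x. prime_filter x}" unfolding D_def by blast
  have o1: "openin (XL_topology t) ({x. prime_filter x} - D)"
    using cD' unfolding clopenin_def closedin_def topspace_XT by blast
  have dd: "{x. prime_filter x} - ({x. prime_filter x} - D) = D" using Dsub by blast
  have c1: "closedin (XL_topology t) ({x. prime_filter x} - D)"
    unfolding closedin_def topspace_XT dd using cD' unfolding clopenin_def by blast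
  have "clopenin (XL_topology t) ({x. prime_filter x} - D)"
    unfolding clopenin_def using o1 c1 by blast
  moreover have "is_upset (XL_topology t) (\<subseteq>) ({x. prime_filter x} - D)"
    unfolding is_upset_def topspace_XT D_def by blast
  ultimately obtain c where c: "{x. prime_filter x} - D = stone_map c" using clopen_upset_phi by blast
  have "c \<notin> y"
  proof
    assume "c \<in> y" then have "y \<in> stone_map c" using py by (simp add: phi_mem)
    then have "y \<notin> D" using c by blast
    then show False unfolding D_def using py by blast
  qed
  moreover have "a \<le> c" if ay: "a \<notin> y" for a
  proof (rule ccontr)
    assume "\<not> a \<le> c"
    then obtain z where z: "prime_filter z" "a \<in> z" "c \<notin> z" using sep by blast
    then have "z \<notin> stone_map c" by (simp add: phi_mem)
    then have "z \<in> D" using c z(1) by blast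
    then have "z \<subseteq> y" unfolding D_def by blast
    then show False using z(2) ay by blast
  qed
  ultimately show ?thesis by blast
qed

lemma min_exists:
  assumes px: "prime_filter x" and kx: "(k::'a) \<in> x"
  shows "\<exists>m\<in>min_set (\<subseteq>) (stone_map k). m \<subseteq> x"
proof -
  define A where "A = {y \<in> stone_map k. y \<subseteq> x}"
  have po: "partial_order_on A (relation_of (\<lambda>a b. b \<subseteq> a) A)"
    by (rule partial_order_on_relation_ofI) auto
  have "\<exists>m\<in>A. \<forall>a\<in>A. a \<subseteq> m \<longrightarrow> a = m"
  proof (rule predicate_Zorn[OF po])
    fix CC assume CC: "CC \<in> Chains (relation_of (\<lambda>a b. b \<subseteq> a) A)"
    have tot: "\<And>a b. a \<in> CC \<Longrightarrow> b \<in> CC \<Longrightarrow> a \<subseteq> b \<or> b \<subseteq> a"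
      using CC unfolding Chains_def relation_of_def by blast
    have inA: "\<And>a. a \<in> CC \<Longrightarrow> a \<in> A"
      using CC unfolding Chains_def relation_of_def by blast
    show "\<exists>u\<in>A. \<forall>a\<in>CC. a \<supseteq> u"
    proof (cases "CC = {}")
      case True
      have "x \<in> A" unfolding A_def using px kx by (simp add: phi_mem)
      then show ?thesis using True by blast
    next
      case False
      have pfa: "\<And>a. a \<in> CC \<Longrightarrow> prime_filter a \<and> k \<in> a \<and> a \<subseteq> x"
        using inA unfolding A_def by (simp add: phi_mem)
      have "prime_filter (\<Inter>CC)" unfolding prime_filter_def
      proof (intro conjI allI impI)
        show "top \<in> \<Inter>CC" using pfa pf_top by blast
        show "bot \<notin> \<Inter>CC" using pfa pf_bot False by blast
      next
        fix a b assume "a \<in> \<Inter>CC \<and> a \<le> b" then show "b \<in> \<Inter>CC" using pfa pf_up by blast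
      next
        fix a b assume "a \<in> \<Inter>CC \<and> b \<in> \<Inter>CC" then show "inf a b \<in> \<Inter>CC" using pfa pf_inf by blast
      next
        fix a b assume ab: "sup a b \<in> \<Inter>CC"
        show "a \<in> \<Inter>CC \<or> b \<in> \<Inter>CC"
        proof (rule ccontr)
          assume "\<not> (a \<in> \<Inter>CC \<or> b \<in> \<Inter>CC)"
          then obtain y1 y2 where y: "y1 \<in> CC" "a \<notin> y1" "y2 \<in> CC" "b \<notin> y2" by blast
          have "y1 \<subseteq> y2 \<or> y2 \<subseteq> y1" using tot y by blast
          then show False
          proof
            assume "y1 \<subseteq> y2"
            then have "b \<notin> y1" using y by blast
            moreover have "sup a b \<in> y1" using ab y(1) by blast
            ultimately show False using pf_sup pfa y by blast
          next
            assume "y2 \<subseteq> y1"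
            then have "a \<notin> y2" using y by blast
            moreover have "sup a b \<in> y2" using ab y(3) by blast
            ultimately show False using pf_sup pfa y by blast
          qed
        qed
      qed
      moreover have "k \<in> \<Inter>CC" using pfa by blast
      moreover have "\<Inter>CC \<subseteq> x" using pfa False by blast
      ultimately have "\<Inter>CC \<in> A" unfolding A_def by (simp add: phi_mem)
      then show ?thesis by blast
    qed
  qed
  then obtain m where m: "m \<in> A" "\<And>a. a \<in> A \<Longrightarrow> a \<subseteq> m \<Longrightarrow> a = m" by blast
  have "m \<in> min_set (\<subseteq>) (stone_map k)"
    unfolding min_set_def
  proof (intro CollectI conjI ballI impI)
    show "m \<in> stone_map k" using m(1) unfolding A_def by blast
  next
    fix y assume "y \<in> stone_map k" "y \<subseteq> m"
    moreover then have "y \<subseteq> x" using m(1) unfolding A_def by blast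
    ultimately show "y = m" using m(2) unfolding A_def by blast
  qed
  then show ?thesis using m(1) unfolding A_def by blast
qed

lemma compact_min_spatial:
  assumes kc: "compact_el (k::'a)"
  shows "min_set (\<subseteq>) (stone_map k) \<subseteq> spatial_part (XL_topology t) (\<subseteq>)"
proof
  fix x assume xm: "x \<in> min_set (\<subseteq>) (stone_map k)"
  then have px: "prime_filter x" and kx: "k \<in> x" and mn: "\<And>y. y \<in> stone_map k \<Longrightarrow> y \<subseteq> x \<Longrightarrow> y = x"
    unfolding min_set_def by (auto simp: phi_mem)
  define m where "m = Sup {a. a \<notin> x}"
  have wb: "\<And>S. k \<le> Sup S \<Longrightarrow> \<exists>T. T \<subseteq> S \<and> finite T \<and> k \<le> Sup T"
    using kc unfolding compact_el_def way_below_def by blast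
  have km: "\<not> k \<le> m"
  proof
    assume "k \<le> m"
    then obtain T where T: "T \<subseteq> {a. a \<notin> x}" "finite T" "k \<le> Sup T" using wb unfolding m_def by blast
    then have "Sup T \<in> x" using pf_up[OF px kx] by blast
    then obtain a where "a \<in> T" "a \<in> x" using pf_Sup_fin[OF px T(2)] by blast
    then show False using T(1) by blast
  qed
  define A where "A = {p. m \<le> p \<and> \<not> k \<le> p}"
  have po: "partial_order_on A (relation_of (\<le>) A)"
    by (rule partial_order_on_relation_ofI) auto
  have "\<exists>p\<in>A. \<forall>a\<in>A. p \<le> a \<longrightarrow> a = p"
  proof (rule predicate_Zorn[OF po])
    fix CC assume CC: "CC \<in> Chains (relation_of (\<le>) A)"
    have tot: "\<forall>a\<in>CC. \<forall>b\<in>CC. a \<le> b \<or> b \<le> a"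
      using CC unfolding Chains_def relation_of_def by blast
    have inA: "\<And>a. a \<in> CC \<Longrightarrow> a \<in> A"
      using CC unfolding Chains_def relation_of_def by blast
    show "\<exists>u\<in>A. \<forall>a\<in>CC. a \<le> u"
    proof (cases "CC = {}")
      case True
      have "m \<in> A" unfolding A_def using km by simp
      then show ?thesis using True by blast
    next
      case False
      then obtain c0 where c0: "c0 \<in> CC" by blast
      have "m \<le> c0" using inA[OF c0] unfolding A_def by simp
      then have mS: "m \<le> Sup CC" using Sup_upper[OF c0] by (rule order_trans)
      moreover have "\<not> k \<le> Sup CC"
      proof
        assume "k \<le> Sup CC"
        then obtain T where T: "T \<subseteq> CC" "finite T" "k \<le> Sup T" using wb by blast
        show False
        proof (cases "T = {}")
          case True
          then have "k \<le> m" using T(3) by (simp add: bot_unique)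
          then show False using km by contradiction
        next
          case False
          have "\<forall>a\<in>T. \<forall>b\<in>T. a \<le> b \<or> b \<le> a" using tot T(1) by blast
          then have "Sup T \<in> T" using fin_chain_Sup_in T(2) False by blast
          then have "Sup T \<in> A" using inA T(1) by blast
          then show False using T(3) unfolding A_def by blast
        qed
      qed
      then have "Sup CC \<in> A" unfolding A_def using mS by simp
      moreover have "\<forall>a\<in>CC. a \<le> Sup CC" by (simp add: Sup_upper)
      ultimately show ?thesis by blast
    qed
  qed
  then obtain p where pA: "p \<in> A" and pmax: "\<And>a. a \<in> A \<Longrightarrow> p \<le> a \<Longrightarrow> a = p" by blast
  have mp: "m \<le> p" and kp: "\<not> k \<le> p" using pA unfolding A_def by blast+
  have ext: "k \<le> sup p a" if "\<not> a \<le> p" for a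
  proof (rule ccontr)
    assume "\<not> k \<le> sup p a"
    moreover have "m \<le> sup p a" using mp by (rule le_supI1)
    ultimately have "sup p a \<in> A" unfolding A_def by simp
    then have "sup p a = p" using pmax by simp
    then show False using that by (metis sup_ge2)
  qed
  have mprime: "inf a b \<le> p \<Longrightarrow> a \<le> p \<or> b \<le> p" for a b
  proof (rule ccontr)
    assume ab: "inf a b \<le> p" "\<not> (a \<le> p \<or> b \<le> p)"
    then have "k \<le> sup p a" "k \<le> sup p b" using ext by blast+
    then have "k \<le> inf (sup p a) (sup p b)" by simp
    also have "\<dots> = sup p (inf a b)" by (simp add: distr2)
    also have "\<dots> = p" using ab(1) by (simp add: sup.absorb1)
    finally show False using kp by contradiction
  qed
  define y where "y = {a. \<not> a \<le> p}"
  have py: "prime_filter y" unfolding prime_filter_def y_def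
  proof (intro conjI allI impI)
    show "top \<in> {a. \<not> a \<le> p}" using kp by (auto simp: top_unique)
    show "bot \<notin> {a. \<not> a \<le> p}" by simp
  next
    fix a b assume "a \<in> {a. \<not> a \<le> p} \<and> a \<le> b" then show "b \<in> {a. \<not> a \<le> p}" by (metis mem_Collect_eq order.trans)
  next
    fix a b assume "a \<in> {a. \<not> a \<le> p} \<and> b \<in> {a. \<not> a \<le> p}" then show "inf a b \<in> {a. \<not> a \<le> p}" using mprime by blast
  next
    fix a b assume "sup a b \<in> {a. \<not> a \<le> p}" then show "a \<in> {a. \<not> a \<le> p} \<or> b \<in> {a. \<not> a \<le> p}" by simp
  qed
  have ky: "k \<in> y" unfolding y_def using kp by simp
  have yx: "y \<subseteq> x"
  proof
    fix a assume ay: "a \<in> y"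
    show "a \<in> x"
    proof (rule ccontr)
      assume "a \<notin> x" then have "a \<le> m" unfolding m_def by (simp add: Sup_upper)
      then have "a \<le> p" using mp by (rule order_trans)
      then show False using ay unfolding y_def by simp
    qed
  qed
  have "y = x" using mn[of y] py ky yx by (simp add: phi_mem)
  then have "p \<notin> x" "\<And>a. a \<notin> x \<Longrightarrow> a \<le> p" unfolding y_def by auto
  then show "x \<in> spatial_part (XL_topology t) (\<subseteq>)" using cp_spatial[OF px] by blast
qed

lemma scott_compact:
  assumes sc: "scott_upset (XL_topology t) (\<subseteq>) (stone_map (k::'a))"
  shows "compact_el k"
  unfolding compact_el_def way_below_def
proof (intro allI impI)
  fix S assume kS: "k \<le> Sup S"
  show "\<exists>T. T \<subseteq> S \<and> finite T \<and> k \<le> Sup T"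
  proof (rule ccontr)
    assume nT: "\<not> ?thesis"
    have "\<exists>x. prime_filter x \<and> {k} \<subseteq> x \<and> x \<inter> S = {}"
    proof (rule PFT)
      fix C0 A0 assume fin: "finite C0" "C0 \<subseteq> {k}" "finite A0" "A0 \<subseteq> S"
      have "k \<le> Inf C0" using fin(2) by (auto intro: Inf_greatest)
      show "\<not> Inf C0 \<le> Sup A0"
      proof
        assume "Inf C0 \<le> Sup A0"
        with \<open>k \<le> Inf C0\<close> have "k \<le> Sup A0" by (rule order_trans)
        then show False using nT fin(3,4) by blast
      qed
    qed
    then obtain x where x: "prime_filter x" "k \<in> x" "x \<inter> S = {}" by blast
    obtain m where m: "m \<in> min_set (\<subseteq>) (stone_map k)" "m \<subseteq> x" using min_exists[OF x(1,2)] by blast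
    have "m \<in> spatial_part (XL_topology t) (\<subseteq>)" using sc m(1) unfolding scott_upset_def by blast
    then obtain p where p: "p \<notin> m" "\<And>a. a \<notin> m \<Longrightarrow> a \<le> p" using spatial_cp by blast
    have pm: "prime_filter m" "k \<in> m" using m(1) unfolding min_set_def by (auto simp: phi_mem)
    have "\<forall>s\<in>S. s \<le> p" using p(2) m(2) x(3) by blast
    then have "Sup S \<le> p" by (simp add: Sup_least)
    then have "k \<le> p" using kS by (rule order_trans[rotated])
    then have "p \<in> m" using pf_up[OF pm(1) pm(2)] by blast
    then show False using p(1) by contradiction
  qed
qed

lemma scott_iff: "scott_upset (XL_topology t) (\<subseteq>) (stone_map (k::'a)) \<longleftrightarrow> compact_el k"
proof
  assume "scott_upset (XL_topology t) (\<subseteq>) (stone_map k)" then show "compact_el k" by (rule scott_compact)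
next
  assume "compact_el k"
  then show "scott_upset (XL_topology t) (\<subseteq>) (stone_map k)"
    unfolding scott_upset_def using closed_phi phi_upset compact_min_spatial by blast
qed

lemma ClopSUp_char: "ClopSUp (XL_topology t) (\<subseteq>) = stone_map ` K_el t"
proof
  show "ClopSUp (XL_topology t) (\<subseteq>) \<subseteq> stone_map ` K_el t"
  proof
    fix V assume "V \<in> ClopSUp (XL_topology t) (\<subseteq>)"
    then have V: "clopenin (XL_topology t) V" "scott_upset (XL_topology t) (\<subseteq>) V" unfolding ClopSUp_def by blast+
    then have "is_upset (XL_topology t) (\<subseteq>) V" unfolding scott_upset_def by blast
    then obtain k where k: "V = stone_map k" using clopen_upset_phi V(1) by blast
    then have "compact_el k" using V(2) scott_iff by blast
    then show "V \<in> stone_map ` K_el t" unfolding K_el_def k by blast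
  qed
next
  show "stone_map ` K_el t \<subseteq> ClopSUp (XL_topology t) (\<subseteq>)"
    unfolding ClopSUp_def K_el_def using clopen_phi scott_iff by blast
qed

lemma core_phi: "core (XL_topology t) (\<subseteq>) (stone_map a) = \<Union>(stone_map ` {b \<in> K_el t. b \<le> (a::'a)})"
  unfolding core_def ClopSUp_char using phi_le by blast

lemma part1: "a = Sup {b \<in> K_el t. b \<le> (a::'a)} \<longleftrightarrow>
   dense_in_set (XL_topology t) (core (XL_topology t) (\<subseteq>) (stone_map a)) (stone_map a)"
proof -
  let ?K = "{b \<in> K_el t. b \<le> a}"
  have le: "Sup ?K \<le> a" by (rule Sup_least) blast
  have sub: "\<Union>(stone_map ` ?K) \<subseteq> stone_map a" using phi_le by blast
  have "dense_in_set (XL_topology t) (core (XL_topology t) (\<subseteq>) (stone_map a)) (stone_map a)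
        \<longleftrightarrow> stone_map a \<subseteq> stone_map (Sup ?K)"
    unfolding dense_in_set_def core_phi closure_Sup using sub by blast
  also have "\<dots> \<longleftrightarrow> a \<le> Sup ?K" by (rule phi_le)
  also have "\<dots> \<longleftrightarrow> a = Sup ?K" using le by (auto intro: order.antisym)
  finally show ?thesis by simp
qed

end



context frm begin

definition imp :: "'a \<Rightarrow> 'a \<Rightarrow> 'a" where
  "imp b c = Sup {d. inf d b \<le> c}"

lemma inf_imp: "inf b (imp b c) \<le> c"
proof -
  have "inf b (imp b c) = Sup ((\<lambda>d. inf b d) ` {d. inf d b \<le> c})" unfolding imp_def by (rule inf_Sup)
  also have "\<dots> \<le> c" by (rule SUP_least) (simp add: inf_commute)
  finally show ?thesis .
qed

lemma imp_ge: "inf d b \<le> c \<Longrightarrow> d \<le> imp b c"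
  unfolding imp_def by (rule Sup_upper) simp

lemma down_Bs: "down_set (XL_topology t) (\<subseteq>) (Bs b c) = {x. prime_filter x} - stone_map (imp b c)"
proof
  show "down_set (XL_topology t) (\<subseteq>) (Bs b c) \<subseteq> {x. prime_filter x} - stone_map (imp b c)"
  proof
    fix z assume "z \<in> down_set (XL_topology t) (\<subseteq>) (Bs b c)"
    then obtain y where pz: "prime_filter z" and y: "y \<in> Bs b c" "z \<subseteq> y"
      unfolding down_set_def topspace_XT by blast
    have py: "prime_filter y" "b \<in> y" "c \<notin> y" using y(1) by (simp_all add: Bs_mem)
    have "imp b c \<notin> z"
    proof
      assume "imp b c \<in> z"
      then have "imp b c \<in> y" using y(2) by blast
      then have "inf b (imp b c) \<in> y" using py(2) pf_inf[OF py(1)] by blast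
      then have "c \<in> y" using inf_imp pf_up[OF py(1)] by blast
      then show False using py(3) by contradiction
    qed
    then show "z \<in> {x. prime_filter x} - stone_map (imp b c)" using pz by (simp add: phi_mem)
  qed
next
  show "{x. prime_filter x} - stone_map (imp b c) \<subseteq> down_set (XL_topology t) (\<subseteq>) (Bs b c)"
  proof
    fix z assume "z \<in> {x. prime_filter x} - stone_map (imp b c)"
    then have pz: "prime_filter z" and iz: "imp b c \<notin> z" by (simp_all add: phi_mem)
    have "\<exists>y. prime_filter y \<and> insert b z \<subseteq> y \<and> y \<inter> {c} = {}"
    proof (rule PFT)
      fix C0 A0 assume fin: "finite C0" "C0 \<subseteq> insert b z" "finite A0" "A0 \<subseteq> {c}"
      show "\<not> Inf C0 \<le> Sup A0"
      proof
        assume le: "Inf C0 \<le> Sup A0"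
        have "Sup A0 \<le> c" using fin(4) by (auto intro: Sup_least)
        with le have Cc: "Inf C0 \<le> c" by (rule order_trans)
        define q where "q = Inf (C0 - {b})"
        have qz: "q \<in> z" unfolding q_def using fin(1,2) by (intro pf_Inf_fin[OF pz]) auto
        have "inf b q \<le> Inf C0" unfolding q_def
        proof (rule Inf_greatest)
          fix e assume "e \<in> C0"
          show "inf b (Inf (C0 - {b})) \<le> e"
          proof (cases "e = b")
            case True then show ?thesis by simp
          next
            case False then have "e \<in> C0 - {b}" using \<open>e \<in> C0\<close> by blast
            then have "Inf (C0 - {b}) \<le> e" by (rule Inf_lower)
            then show ?thesis by (rule le_infI2)
          qed
        qed
        then have "inf b q \<le> c" using Cc by (rule order_trans)
        then have "inf q b \<le> c" by (simp add: inf_commute)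
        then have "q \<le> imp b c" by (rule imp_ge)
        then have "imp b c \<in> z" using pf_up[OF pz qz] by blast
        then show False using iz by contradiction
      qed
    qed
    then obtain y where y: "prime_filter y" "insert b z \<subseteq> y" "c \<notin> y" by blast
    then have "y \<in> Bs b c" by (simp add: Bs_mem)
    moreover have "z \<subseteq> y" using y(2) by blast
    ultimately show "z \<in> down_set (XL_topology t) (\<subseteq>) (Bs b c)"
      unfolding down_set_def topspace_XT using pz by blast
  qed
qed

lemma down_clopen:
  assumes U: "clopenin (XL_topology t) U"
  shows "clopenin (XL_topology t) (down_set (XL_topology t) (\<subseteq>) U)"
proof -
  have Uo: "openin (XL_topology t) U" and Uc: "closedin (XL_topology t) U" using U unfolding clopenin_def by blast+
  have Usub: "U \<subseteq> {x. prime_filter x}" and Ub: "\<forall>x\<in>U. \<exists>b c. x \<in> Bs b c \<and> Bs b c \<subseteq> U"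
    using Uo unfolding openin_XT by blast+
  have "openin (XL_topology t) ({x. prime_filter x} - U)" using Uc unfolding closedin_def topspace_XT by blast
  then have Vb: "\<forall>x\<in>{x. prime_filter x} - U. \<exists>b c. x \<in> Bs b c \<and> Bs b c \<subseteq> {x. prime_filter x} - U"
    unfolding openin_XT by (rule conjunct2)
  define P where "P = {p. Bs (fst p) (snd p) \<subseteq> U} \<union> {p. Bs (fst p) (snd p) \<subseteq> {x. prime_filter x} - (U::'a set set)}"
  have "covers P" unfolding covers_def
  proof (intro allI impI)
    fix y :: "'a set" assume py: "prime_filter y"
    show "\<exists>p\<in>P. fst p \<in> y \<and> snd p \<notin> y"
    proof (cases "y \<in> U")
      case True
      then obtain b c where "y \<in> Bs b c" "Bs b c \<subseteq> U" using Ub by blast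
      then show ?thesis unfolding P_def by (intro bexI[of _ "(b, c)"]) (auto simp: Bs_mem)
    next
      case False
      then obtain b c where "y \<in> Bs b c" "Bs b c \<subseteq> {x. prime_filter x} - U" using Vb py by blast
      then show ?thesis unfolding P_def by (intro bexI[of _ "(b, c)"]) (auto simp: Bs_mem)
    qed
  qed
  then obtain P0 where P0: "finite P0" "P0 \<subseteq> P" "covers P0" using compact_pairs by blast
  define P1 where "P1 = P0 \<inter> {p. Bs (fst p) (snd p) \<subseteq> U}"
  have fP1: "finite P1" unfolding P1_def using P0(1) by simp
  have Ueq: "U = (\<Union>p\<in>P1. Bs (fst p) (snd p))"
  proof
    show "U \<subseteq> (\<Union>p\<in>P1. Bs (fst p) (snd p))"
    proof
      fix y assume yU: "y \<in> U"
      then have py: "prime_filter y" using Usub by blast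
      obtain p where p: "p \<in> P0" "fst p \<in> y" "snd p \<notin> y" using P0(3) py unfolding covers_def by blast
      have yB: "y \<in> Bs (fst p) (snd p)" using p py by (simp add: Bs_mem)
      then have "\<not> Bs (fst p) (snd p) \<subseteq> {x. prime_filter x} - U" using yU by blast
      then have "Bs (fst p) (snd p) \<subseteq> U" using p(1) P0(2) unfolding P_def by blast
      then have "p \<in> P1" unfolding P1_def using p(1) by blast
      then show "y \<in> (\<Union>p\<in>P1. Bs (fst p) (snd p))" using yB by blast
    qed
  next
    show "(\<Union>p\<in>P1. Bs (fst p) (snd p)) \<subseteq> U" unfolding P1_def by blast
  qed
  have "down_set (XL_topology t) (\<subseteq>) U = (\<Union>p\<in>P1. down_set (XL_topology t) (\<subseteq>) (Bs (fst p) (snd p)))"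
    unfolding down_set_def by (subst Ueq) blast
  also have "\<dots> = (\<Union>p\<in>P1. {x. prime_filter x} - stone_map (imp (fst p) (snd p)))"
    by (simp only: down_Bs)
  finally have deq: "down_set (XL_topology t) (\<subseteq>) U = \<Union>((\<lambda>p. {x. prime_filter x} - stone_map (imp (fst p) (snd p))) ` P1)" .
  have "openin (XL_topology t) (\<Union>((\<lambda>p. {x. prime_filter x} - stone_map (imp (fst p) (snd p))) ` P1))"
    by (rule openin_Union) (auto intro: open_nphi)
  moreover have "closedin (XL_topology t) (\<Union>((\<lambda>p. {x. prime_filter x} - stone_map (imp (fst p) (snd p))) ` P1))"
    by (rule closedin_Union) (auto intro: closed_nphi simp: fP1)
  ultimately show ?thesis unfolding clopenin_def deq by blast
qed

lemma closure_upset_open: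
  assumes U: "openin (XL_topology t) U" "is_upset (XL_topology t) (\<subseteq>) U"
  shows "openin (XL_topology t) (XL_topology t closure_of U)"
proof -
  define S where "S = {a::'a. stone_map a \<subseteq> U}"
  have "U = \<Union>(stone_map ` S)"
  proof
    show "U \<subseteq> \<Union>(stone_map ` S)"
    proof
      fix x assume "x \<in> U"
      then obtain a where "x \<in> stone_map a" "stone_map a \<subseteq> U" using open_upset_phi[OF U] by blast
      then show "x \<in> \<Union>(stone_map ` S)" unfolding S_def by blast
    qed
    show "\<Union>(stone_map ` S) \<subseteq> U" unfolding S_def by blast
  qed
  then have "XL_topology t closure_of U = stone_map (Sup S)" using closure_Sup by simp
  then show ?thesis using open_phi by simp
qed

lemma L_space_XT: "L_space (XL_topology t) (\<subseteq>)"
  unfolding L_space_def priestley_space_def stone_space_def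
proof (intro conjI allI impI)
  show "compact_space (XL_topology t)" by (rule compact_XT)
next
  show "Hausdorff_space (XL_topology t)" unfolding Hausdorff_space_def topspace_XT
  proof (intro allI impI)
    fix x y :: "'a set" assume xy: "x \<in> {x. prime_filter x} \<and> y \<in> {x. prime_filter x} \<and> x \<noteq> y"
    show "\<exists>U V. openin (XL_topology t) U \<and> openin (XL_topology t) V \<and> x \<in> U \<and> y \<in> V \<and> disjnt U V"
    proof (cases "x \<subseteq> y")
      case False
      then obtain a where a: "a \<in> x" "a \<notin> y" by blast
      show ?thesis
        by (rule exI[of _ "stone_map a"], rule exI[of _ "{x. prime_filter x} - stone_map a"])
           (use a xy open_phi open_nphi in \<open>auto simp: phi_mem disjnt_def\<close>)
    next
      case True
      then have "\<not> y \<subseteq> x" using xy by blast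
      then obtain a where a: "a \<in> y" "a \<notin> x" by blast
      show ?thesis
        by (rule exI[of _ "{x. prime_filter x} - stone_map a"], rule exI[of _ "stone_map a"])
           (use a xy open_phi open_nphi in \<open>auto simp: phi_mem disjnt_def\<close>)
    qed
  qed
next
  fix U x assume Ux: "openin (XL_topology t) U \<and> x \<in> U"
  then have "\<forall>x\<in>U. \<exists>b c. x \<in> Bs b c \<and> Bs b c \<subseteq> U" unfolding openin_XT by (rule conjunct2[OF conjunct1])
  then obtain b c where "x \<in> Bs b c" "Bs b c \<subseteq> U" using Ux by blast
  moreover have "clopenin (XL_topology t) (Bs b c)" unfolding clopenin_def using open_Bs closed_Bs by blast
  ultimately show "\<exists>V. clopenin (XL_topology t) V \<and> x \<in> V \<and> V \<subseteq> U" by blast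
next
  show "partial_order_on_space (XL_topology t) (\<subseteq>)" unfolding partial_order_on_space_def by blast
next
  show "\<forall>x\<in>topspace (XL_topology t). \<forall>y\<in>topspace (XL_topology t). \<not> x \<subseteq> y \<longrightarrow>
        (\<exists>U. clopenin (XL_topology t) U \<and> is_upset (XL_topology t) (\<subseteq>) U \<and> x \<in> U \<and> y \<notin> U)"
    unfolding topspace_XT
  proof (intro ballI impI)
    fix x y :: "'a set" assume "x \<in> {x. prime_filter x}" "y \<in> {x. prime_filter x}" "\<not> x \<subseteq> y"
    then obtain a where "a \<in> x" "a \<notin> y" "prime_filter x" by blast
    then show "\<exists>U. clopenin (XL_topology t) U \<and> is_upset (XL_topology t) (\<subseteq>) U \<and> x \<in> U \<and> y \<notin> U"
      using clopen_phi phi_upset by (intro exI[of _ "stone_map a"]) (auto simp: phi_mem)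
  qed
next
  fix U assume "clopenin (XL_topology t) U"
  then show "clopenin (XL_topology t) (down_set (XL_topology t) (\<subseteq>) U)" by (rule down_clopen)
next
  fix U assume "openin (XL_topology t) U \<and> is_upset (XL_topology t) (\<subseteq>) U"
  then show "openin (XL_topology t) (XL_topology t closure_of U)" using closure_upset_open by blast
qed

end

theorem theorem4p4:
  fixes t :: "'a::complete_lattice itself"
  assumes frame: "is_frame t"
  shows "(\<forall>a::'a. a = Sup {b \<in> K_el t. b \<le> a}
            \<longleftrightarrow> dense_in_set (XL_topology t) (core (XL_topology t) (\<subseteq>) (stone_map a)) (stone_map a))
         \<and> (algebraic_frame t \<longleftrightarrow> algebraic_L_space (XL_topology t) (\<subseteq>))"
proof -
  interpret frm t by (rule frm.intro) (rule frame)
  have P1: "\<forall>a::'a. a = Sup {b \<in> K_el t. b \<le> a}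
            \<longleftrightarrow> dense_in_set (XL_topology t) (core (XL_topology t) (\<subseteq>) (stone_map a)) (stone_map a)"
    using part1 by blast
  have P2: "algebraic_frame t \<longleftrightarrow> algebraic_L_space (XL_topology t) (\<subseteq>)"
  proof
    assume af: "algebraic_frame t"
    have "\<forall>U\<in>ClopUp (XL_topology t) (\<subseteq>). dense_in_set (XL_topology t) (core (XL_topology t) (\<subseteq>) U) U"
    proof
      fix U assume "U \<in> ClopUp (XL_topology t) (\<subseteq>)"
      then obtain a :: 'a where "U = stone_map a" using ClopUp_char by blast
      moreover have "a = Sup {b \<in> K_el t. b \<le> a}" using af unfolding algebraic_frame_def by blast
      ultimately show "dense_in_set (XL_topology t) (core (XL_topology t) (\<subseteq>) U) U" using P1 by blast
    qed
    then show "algebraic_L_space (XL_topology t) (\<subseteq>)"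
      unfolding algebraic_L_space_def using L_space_XT by blast
  next
    assume al: "algebraic_L_space (XL_topology t) (\<subseteq>)"
    have "a = Sup {b \<in> K_el t. b \<le> a}" for a :: 'a
    proof -
      have "stone_map a \<in> ClopUp (XL_topology t) (\<subseteq>)" using ClopUp_char by blast
      then have "dense_in_set (XL_topology t) (core (XL_topology t) (\<subseteq>) (stone_map a)) (stone_map a)"
        using al unfolding algebraic_L_space_def by blast
      then show ?thesis using P1 by blast
    qed
    then show "algebraic_frame t" unfolding algebraic_frame_def using frame by blast
  qed
  show ?thesis using P1 P2 by blast
qed


end
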